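(* Let $\gamma_a,\gamma_s>0$, $\lambda\ge 0$, $q>0$, $\sigma_B>0$ and $\varepsilon_a\in(0,2)$. Let $\beta_a,\beta_s:\mathbb R\to\mathbb R$ be globally Lipschitz continuous with $\beta_a\ge 0$ and $\beta_s>0$, and set $\mathcal R_a(T_a)=q\beta_a(T_a)$, $\mathcal R_s(T_s)=q\beta_s(T_s)$. Let $T_a^{(0)}\ge 0$ and $T_s^{(0)}\ge 0$. Then the problem \[ \begin{cases} \gamma_a T_a'=-\lambda(T_a-T_s)+\varepsilon_a\sigma_B|T_s|^3T_s-2\varepsilon_a\sigma_B|T_a|^3T_a+\mathcal R_a(T_a),\\ \gamma_s T_s'=-\lambda(T_s-T_a)-\sigma_B|T_s|^3T_s+\varepsilon_a\sigma_B|T_a|^3T_a+\mathcal R_s(T_s),\\ T_a(0)=T_a^{(0)},\quad T_s(0)=T_s^{(0)} \end{cases} \] admits a unique solution, which is defined and bounded on $[0,+\infty)$. Moreover, $T_a(t)>0$ and $T_s(t)>0$ for every $t\in(0,+\infty)$. *)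

theory Defs
  imports "HOL-Analysis.Analysis"
begin

definition rhs_a :: "real \<Rightarrow> real \<Rightarrow> real \<Rightarrow> real \<Rightarrow> (real \<Rightarrow> real) \<Rightarrow> real \<Rightarrow> real \<Rightarrow> real" where
  "rhs_a lam epsa sigB q beta_a Ta Ts =
     - lam * (Ta - Ts) + epsa * sigB * (\<bar>Ts\<bar> ^ 3 * Ts) - 2 * epsa * sigB * (\<bar>Ta\<bar> ^ 3 * Ta)
     + q * beta_a Ta"

definition rhs_s :: "real \<Rightarrow> real \<Rightarrow> real \<Rightarrow> real \<Rightarrow> (real \<Rightarrow> real) \<Rightarrow> real \<Rightarrow> real \<Rightarrow> real" where
  "rhs_s lam epsa sigB q beta_s Ta Ts =
     - lam * (Ts - Ta) - sigB * (\<bar>Ts\<bar> ^ 3 * Ts) + epsa * sigB * (\<bar>Ta\<bar> ^ 3 * Ta)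
     + q * beta_s Ts"

definition is_solution ::
  "real \<Rightarrow> real \<Rightarrow> real \<Rightarrow> real \<Rightarrow> real \<Rightarrow> real \<Rightarrow> (real \<Rightarrow> real) \<Rightarrow> (real \<Rightarrow> real)
   \<Rightarrow> real \<Rightarrow> real \<Rightarrow> real set \<Rightarrow> (real \<Rightarrow> real) \<Rightarrow> (real \<Rightarrow> real) \<Rightarrow> bool" where
  "is_solution gam_a gam_s lam q sigB epsa beta_a beta_s Ta0 Ts0 I Ta Ts \<longleftrightarrow>
     Ta 0 = Ta0 \<and> Ts 0 = Ts0 \<and>
     (\<forall>t\<in>I. \<exists>Da Ds.
        (Ta has_real_derivative Da) (at t within I) \<and>
        (Ts has_real_derivative Ds) (at t within I) \<and>
        gam_a * Da = rhs_a lam epsa sigB q beta_a (Ta t) (Ts t) \<and>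
        gam_s * Ds = rhs_s lam epsa sigB q beta_s (Ta t) (Ts t))"

end

theory Submission
  imports Defs
begin

lemma pow_has_integral:
  fixes c t :: real
  assumes "0 \<le> t"
  shows "((\<lambda>s. c * s^k / fact k) has_integral (c * t^(Suc k) / fact (Suc k))) {0..t}"
proof -
  have "((\<lambda>s. c * s^k / fact k) has_integral ((\<lambda>s. c * s^(Suc k) / fact (Suc k)) t - (\<lambda>s. c * s^(Suc k) / fact (Suc k)) 0)) {0..t}"
  proof (rule fundamental_theorem_of_calculus[OF assms])
    fix x assume "x \<in> {0..t}"
    have "DERIV (\<lambda>s. s^Suc k) x :> of_nat (Suc k) * x^k" using DERIV_pow[of "Suc k" x] by simp
    then have "DERIV (\<lambda>s. c * s^(Suc k) / fact (Suc k)) x :> (c * (of_nat (Suc k) * x^k) / fact (Suc k))"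
      by (intro DERIV_cdivide DERIV_cmult)
    then have "((\<lambda>s. c * s^(Suc k) / fact (Suc k)) has_real_derivative (c * (of_nat (Suc k) * x^k) / fact (Suc k))) (at x within {0..t})"
      by (rule has_field_derivative_at_within)
    moreover have "c * (of_nat (Suc k) * x^k) / fact (Suc k) = c * x^k / fact k"
      by (simp add: fact_Suc del: of_nat_Suc)
    ultimately show "((\<lambda>s. c * s^(Suc k) / fact (Suc k)) has_vector_derivative c * x^k / fact k) (at x within {0..t})"
      by (simp add: has_real_derivative_iff_has_vector_derivative)
  qed
  then show ?thesis by simp
qed

lemma picard_global:
  fixes G :: "'a::banach \<Rightarrow> 'a"
  assumes lip: "L-lipschitz_on UNIV G"
  shows "\<exists>x. x 0 = x0 \<and> (\<forall>t\<ge>0. (x has_vector_derivative G (x t)) (at t within {0..}))"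
proof -
  have L0: "0 \<le> L" using lip by (simp add: lipschitz_on_def)
  have Gl: "norm (G a - G b) \<le> L * norm (a - b)" for a b
    using lip by (simp add: lipschitz_on_def dist_norm)
  have contG: "continuous_on UNIV G" using lipschitz_on_continuous_on[OF lip] .
  define X :: "nat \<Rightarrow> real \<Rightarrow> 'a" where "X = rec_nat (\<lambda>t. x0) (\<lambda>k Xk t. x0 + integral {0..t} (\<lambda>s. G (Xk s)))"
  have X0: "X 0 = (\<lambda>t. x0)" by (simp add: X_def)
  have XS: "X (Suc k) = (\<lambda>t. x0 + integral {0..t} (\<lambda>s. G (X k s)))" for k by (simp add: X_def)
  have XS': "X (Suc k) t = x0 + integral {0..t} (\<lambda>s. G (X k s))" for k t by (simp add: X_def)
  have contX: "continuous_on {0..T} (X k)" for k T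
  proof (induction k arbitrary: T)
    case 0 then show ?case by (simp add: X0)
  next
    case (Suc k)
    have "continuous_on {0..T} (\<lambda>s. G (X k s))"
      using continuous_on_compose2[OF contG Suc] by auto
    then have "(\<lambda>s. G (X k s)) integrable_on {0..T}" by (rule integrable_continuous_interval)
    then have "continuous_on {0..T} (\<lambda>t. integral {0..t} (\<lambda>s. G (X k s)))"
      by (rule indefinite_integral_continuous_1)
    then show ?case unfolding XS by (intro continuous_intros)
  qed
  have contGX: "continuous_on {0..T} (\<lambda>s. G (X k s))" for k T
    using continuous_on_compose2[OF contG contX] by auto
  have intGX: "(\<lambda>s. G (X k s)) integrable_on {0..T}" for k T
    by (rule integrable_continuous_interval[OF contGX])
  define N where "N = norm (G x0)"
  have bound: "norm (X (Suc k) t - X k t) \<le> N * L^k * t^(Suc k) / fact (Suc k)" if "0 \<le> t" for k t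
    using that
  proof (induction k arbitrary: t)
    case 0
    then show ?case by (simp add: XS X0 N_def)
  next
    case (Suc k)
    have "X (Suc (Suc k)) t - X (Suc k) t = integral {0..t} (\<lambda>s. G (X (Suc k) s) - G (X k s))"
      unfolding XS'[of "Suc k" t] XS'[of k t] by (simp add: integral_diff[OF intGX intGX])
    also have "norm \<dots> \<le> integral {0..t} (\<lambda>s. (L * N * L^k) * s^(Suc k) / fact (Suc k))"
    proof (rule integral_norm_bound_integral)
      show "(\<lambda>s. G (X (Suc k) s) - G (X k s)) integrable_on {0..t}"
        by (intro integrable_diff intGX)
      show "(\<lambda>s. (L * N * L^k) * s^(Suc k) / fact (Suc k)) integrable_on {0..t}"
        using pow_has_integral[OF Suc.prems] by blast
      fix s assume s: "s \<in> {0..t}"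
      have "norm (G (X (Suc k) s) - G (X k s)) \<le> L * norm (X (Suc k) s - X k s)" by (rule Gl)
      also have "\<dots> \<le> L * (N * L^k * s^(Suc k) / fact (Suc k))"
        using Suc.IH[of s] s L0 by (intro mult_left_mono) auto
      finally show "norm (G (X (Suc k) s) - G (X k s)) \<le> (L * N * L^k) * s^(Suc k) / fact (Suc k)"
        by simp
    qed
    also have "\<dots> = (L * N * L^k) * t^(Suc (Suc k)) / fact (Suc (Suc k))"
      using pow_has_integral[OF Suc.prems] by blast
    also have "\<dots> = N * L^Suc k * t^Suc (Suc k) / fact (Suc (Suc k))"
    proof -
      have LN: "L * N * L^k = N * L^Suc k" by (simp add: mult.commute mult.left_commute)
      show ?thesis by (simp only: LN)
    qed
    finally show ?case .
  qed
  define x where "x t = x0 + (\<Sum>j. X (Suc j) t - X j t)" for t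
  have ul: "uniform_limit {0..T} X x sequentially" for T
  proof -
    have W: "uniform_limit {0..T} (\<lambda>n s. \<Sum>i<n. X (Suc i) s - X i s) (\<lambda>s. \<Sum>i. X (Suc i) s - X i s) sequentially"
    proof (rule Weierstrass_m_test)
      fix j s assume s: "s \<in> {0..T}"
      have "norm (X (Suc j) s - X j s) \<le> N * L^j * s^Suc j / fact (Suc j)"
        using bound[of s j] s by auto
      also have "\<dots> \<le> N * L^j * T^Suc j / fact j"
      proof -
        have a: "s^Suc j \<le> T^Suc j" using s by (intro power_mono) auto
        have NL: "0 \<le> N * L^j" using L0 by (simp add: N_def)
        have b: "N * L^j * s^Suc j \<le> N * L^j * T^Suc j" by (rule mult_left_mono[OF a NL])
        have c: "(fact j :: real) \<le> fact (Suc j)" by (rule fact_mono) simp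
        have d: "0 \<le> N * L^j * s^Suc j" using NL s by simp
        have "N * L^j * s^Suc j / fact (Suc j) \<le> N * L^j * s^Suc j / fact j"
          by (rule divide_left_mono[OF c d]) simp
        also have "\<dots> \<le> N * L^j * T^Suc j / fact j"
          by (rule divide_right_mono[OF b]) simp
        finally show ?thesis .
      qed
      also have "\<dots> = N * T * (inverse (fact j) * (L*T)^j)"
        by (simp add: power_mult_distrib divide_inverse mult_ac)
      finally show "norm (X (Suc j) s - X j s) \<le> N * T * (inverse (fact j) * (L*T)^j)" .
    next
      show "summable (\<lambda>j. N * T * (inverse (fact j) * (L*T)^j))"
        by (intro summable_mult summable_exp)
    qed
    have tel: "(\<Sum>i<n. X (Suc i) s - X i s) = X n s - x0" for n s
      using sum_lessThan_telescope[of "\<lambda>i. X i s" n] by (simp add: X0)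
    have eq: "dist (X n s - x0) (\<Sum>i. X (Suc i) s - X i s) = dist (X n s) (x s)" for n s
      by (simp add: x_def dist_norm diff_diff_eq)
    show ?thesis
      using W unfolding tel uniform_limit_iff eq .
  qed
  have contx: "continuous_on {0..T} x" for T
    by (rule uniform_limit_theorem[OF always_eventually ul]) (auto intro: contX)
  have contGx: "continuous_on {0..T} (\<lambda>s. G (x s))" for T
    using continuous_on_compose2[OF contG contx] by auto
  have intGx: "(\<lambda>s. G (x s)) integrable_on {0..T}" for T
    by (rule integrable_continuous_interval[OF contGx])
  have inteq: "x t = x0 + integral {0..t} (\<lambda>s. G (x s))" if t0: "0 \<le> t" for t
  proof -
    have "(\<lambda>n. X n t) \<longlonglongrightarrow> x t"
      by (rule tendsto_uniform_limitI[OF ul]) (use t0 in auto)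
    then have l1: "(\<lambda>n. X (Suc n) t) \<longlonglongrightarrow> x t"
      by (rule LIMSEQ_Suc)
    have "(\<lambda>n. integral {0..t} (\<lambda>s. G (X n s))) \<longlonglongrightarrow> integral {0..t} (\<lambda>s. G (x s))"
    proof (rule tendstoI)
      fix e :: real assume e: "0 < e"
      define e' where "e' = e / (L * t + 1)"
      have Lt: "0 \<le> L * t" using L0 t0 by simp
      have e': "0 < e'" using e Lt by (simp add: e'_def)
      show "\<forall>\<^sub>F n in sequentially. dist (integral {0..t} (\<lambda>s. G (X n s))) (integral {0..t} (\<lambda>s. G (x s))) < e"
        using uniform_limitD[OF ul[of t] e']
      proof eventually_elim
        case (elim n)
        have "dist (integral {0..t} (\<lambda>s. G (X n s))) (integral {0..t} (\<lambda>s. G (x s)))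
            = norm (integral {0..t} (\<lambda>s. G (X n s) - G (x s)))"
          by (simp add: dist_norm integral_diff[OF intGX intGx])
        also have "\<dots> \<le> integral {0..t} (\<lambda>s. L * e')"
        proof (rule integral_norm_bound_integral)
          show "(\<lambda>s. G (X n s) - G (x s)) integrable_on {0..t}"
            by (intro integrable_diff intGX intGx)
          show "(\<lambda>s. L * e') integrable_on {0..t}" by (rule integrable_const_ivl)
          fix s assume s: "s \<in> {0..t}"
          have "norm (G (X n s) - G (x s)) \<le> L * norm (X n s - x s)" by (rule Gl)
          also have "\<dots> \<le> L * e'"
            using elim s L0 by (intro mult_left_mono) (auto simp: dist_norm less_imp_le)
          finally show "norm (G (X n s) - G (x s)) \<le> L * e'" .
        qed
        also have "\<dots> = L * t * e'" using t0 by simp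
        also have "\<dots> < e"
        proof -
          have "L * t * e' = e * (L * t / (L * t + 1))" using Lt by (simp add: e'_def field_simps)
          also have "\<dots> < e * 1" using e Lt by (intro mult_strict_left_mono) auto
          finally show ?thesis by simp
        qed
        finally show ?case .
      qed
    qed
    then have "(\<lambda>n. X (Suc n) t) \<longlonglongrightarrow> x0 + integral {0..t} (\<lambda>s. G (x s))"
      unfolding XS' by (intro tendsto_add tendsto_const)
    from LIMSEQ_unique[OF l1 this] show ?thesis .
  qed
  have deriv: "(x has_vector_derivative G (x t)) (at t within {0..})" if t0: "0 \<le> t" for t
  proof -
    have t1: "t \<in> {0..t+1}" using t0 by simp
    have I: "((\<lambda>u. integral {0..u} (\<lambda>s. G (x s))) has_vector_derivative G (x t)) (at t within {0..t+1})"
      by (rule integral_has_vector_derivative[OF contGx t1])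
    have "((\<lambda>u. x0 + integral {0..u} (\<lambda>s. G (x s))) has_vector_derivative G (x t)) (at t within {0..t+1})"
      using has_vector_derivative_add[OF has_vector_derivative_const[of x0] I] by simp
    then have "(x has_vector_derivative G (x t)) (at t within {0..t+1})"
      by (rule has_vector_derivative_transform[OF t1, rotated]) (auto simp: inteq)
    moreover have "at t within {0..} = at t within {0..t+1}"
      by (rule at_within_nhd[where S="{..<t+1}"]) auto
    ultimately show ?thesis by simp
  qed
  have "x 0 = x0"
    using inteq[of 0] by simp
  with deriv show ?thesis by blast
qed

lemma quart_lip:
  fixes x y K :: real
  assumes "\<bar>x\<bar> \<le> K" "\<bar>y\<bar> \<le> K"
  shows "\<bar>\<bar>x\<bar>^3 * x - \<bar>y\<bar>^3 * y\<bar> \<le> 4 * K^3 * \<bar>x - y\<bar>"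
proof -
  have K0: "0 \<le> K" using assms by linarith
  have same: "\<bar>a^4 - b^4\<bar> \<le> 4 * K^3 * \<bar>a - b\<bar>" if "0 \<le> a" "0 \<le> b" "a \<le> K" "b \<le> K" for a b :: real
  proof -
    have fac: "a^4 - b^4 = (a - b) * (a^3 + a^2*b + a*b^2 + b^3)" by algebra
    have "a^3 \<le> K^3" "b^3 \<le> K^3" using that by (auto intro: power_mono)
    moreover have "a^2*b \<le> K^3" "a*b^2 \<le> K^3"
    proof -
      have "a^2 * b \<le> K^2 * K" using that by (intro mult_mono power_mono) auto
      then show "a^2*b \<le> K^3" by (simp add: power3_eq_cube power2_eq_square)
      have "a * b^2 \<le> K * K^2" using that by (intro mult_mono power_mono) auto
      then show "a*b^2 \<le> K^3" by (simp add: power3_eq_cube power2_eq_square)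
    qed
    ultimately have "a^3 + a^2*b + a*b^2 + b^3 \<le> 4 * K^3" by linarith
    moreover have "0 \<le> a^3 + a^2*b + a*b^2 + b^3" using that by simp
    ultimately have "\<bar>a^3 + a^2*b + a*b^2 + b^3\<bar> \<le> 4 * K^3" by simp
    then have "\<bar>a - b\<bar> * \<bar>a^3 + a^2*b + a*b^2 + b^3\<bar> \<le> \<bar>a - b\<bar> * (4 * K^3)"
      by (intro mult_left_mono) auto
    then show ?thesis unfolding fac abs_mult by (simp add: mult_ac)
  qed
  have opp: "a^4 + b^4 \<le> K^3 * (a + b)" if "0 \<le> a" "0 \<le> b" "a \<le> K" "b \<le> K" for a b :: real
  proof -
    have "a^3 \<le> K^3" "b^3 \<le> K^3" using that by (auto intro: power_mono)
    then have "a^3 * a \<le> K^3 * a" "b^3 * b \<le> K^3 * b" using that by (auto intro: mult_right_mono)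
    then show ?thesis by (simp add: power4_eq_xxxx power3_eq_cube algebra_simps)
  qed
  have K3: "0 \<le> K^3" using K0 by simp
  show ?thesis
  proof (cases "0 \<le> x")
    case x: True
    show ?thesis
    proof (cases "0 \<le> y")
      case True
      then show ?thesis using same[of x y] x assms
        by (simp add: power4_eq_xxxx power3_eq_cube)
    next
      case False
      have e: "\<bar>x\<bar>^3 * x - \<bar>y\<bar>^3 * y = x^4 + (-y)^4" using x False
        by (simp add: power4_eq_xxxx power3_eq_cube)
      have "0 \<le> x^4 + (-y)^4" by simp
      then have "\<bar>\<bar>x\<bar>^3 * x - \<bar>y\<bar>^3 * y\<bar> = x^4 + (-y)^4" unfolding e by simp
      also have "\<dots> \<le> K^3 * (x + -y)" using opp[of x "-y"] x False assms by auto
      also have "\<dots> \<le> 4 * K^3 * \<bar>x - y\<bar>" using x False K3 by (simp add: mult_right_mono)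
      finally show ?thesis .
    qed
  next
    case x: False
    show ?thesis
    proof (cases "0 \<le> y")
      case y: True
      have e: "\<bar>x\<bar>^3 * x - \<bar>y\<bar>^3 * y = -((-x)^4 + y^4)" using x y
        by (simp add: power4_eq_xxxx power3_eq_cube)
      have "0 \<le> (-x)^4 + y^4" by simp
      then have "\<bar>\<bar>x\<bar>^3 * x - \<bar>y\<bar>^3 * y\<bar> = (-x)^4 + y^4" unfolding e abs_minus_cancel by (rule abs_of_nonneg)
      also have "\<dots> \<le> K^3 * (-x + y)" using opp[of "-x" y] x y assms by auto
      also have "\<dots> \<le> 4 * K^3 * \<bar>x - y\<bar>" using x y K3 by (simp add: mult_right_mono)
      finally show ?thesis .
    next
      case False
      have "\<bar>\<bar>x\<bar>^3 * x - \<bar>y\<bar>^3 * y\<bar> = \<bar>(-x)^4 - (-y)^4\<bar>" using x False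
        by (simp add: power4_eq_xxxx power3_eq_cube)
      also have "\<dots> \<le> 4 * K^3 * \<bar>(-x) - (-y)\<bar>" using same[of "-x" "-y"] x False assms by auto
      finally show ?thesis by (simp add: abs_minus_commute)
    qed
  qed
qed


lemma tri5:
  fixes l x y u v w :: real
  assumes "0 \<le> l"
  shows "\<bar>-l*(x-y) + u + v + w\<bar> \<le> l*\<bar>x\<bar> + l*\<bar>y\<bar> + \<bar>u\<bar> + \<bar>v\<bar> + \<bar>w\<bar>"
proof -
  have "\<bar>l*(x-y)\<bar> = l*\<bar>x-y\<bar>" using assms by (simp add: abs_mult)
  also have "\<dots> \<le> l*(\<bar>x\<bar>+\<bar>y\<bar>)" using assms by (intro mult_left_mono) auto
  finally have "\<bar>l*(x-y)\<bar> \<le> l*\<bar>x\<bar> + l*\<bar>y\<bar>" by (simp add: algebra_simps)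
  then show ?thesis by linarith
qed

lemma rhs_a_lip:
  fixes a1 a2 s1 s2 K La :: real
  assumes "lam \<ge> 0" "0 < epsa" "epsa < 2" "sigB > 0" "q > 0" "La-lipschitz_on UNIV beta_a"
    "\<bar>a1\<bar> \<le> K" "\<bar>a2\<bar> \<le> K" "\<bar>s1\<bar> \<le> K" "\<bar>s2\<bar> \<le> K"
  shows "\<bar>rhs_a lam epsa sigB q beta_a a1 s1 - rhs_a lam epsa sigB q beta_a a2 s2\<bar>
         \<le> (lam + 16* sigB*K^3 + q*La) * (\<bar>a1-a2\<bar> + \<bar>s1-s2\<bar>)"
proof -
  define Qa where "Qa = \<bar>a1\<bar>^3*a1 - \<bar>a2\<bar>^3*a2"
  define Qs where "Qs = \<bar>s1\<bar>^3* s1 - \<bar>s2\<bar>^3* s2"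
  define B where "B = beta_a a1 - beta_a a2"
  have K3: "0 \<le> K^3" using assms(7) by simp
  have "rhs_a lam epsa sigB q beta_a a1 s1 - rhs_a lam epsa sigB q beta_a a2 s2
      = -lam*((a1-a2) - (s1-s2)) + epsa* sigB*Qs - 2*epsa* sigB*Qa + q*B"
    by (simp add: rhs_a_def Qa_def Qs_def B_def algebra_simps)
  then have "\<bar>rhs_a lam epsa sigB q beta_a a1 s1 - rhs_a lam epsa sigB q beta_a a2 s2\<bar>
      \<le> lam*\<bar>a1-a2\<bar> + lam*\<bar>s1-s2\<bar> + epsa* sigB*\<bar>Qs\<bar> + 2*epsa* sigB*\<bar>Qa\<bar> + q*\<bar>B\<bar>"
    using tri5[OF assms(1), of "a1-a2" "s1-s2" "epsa* sigB*Qs" "-(2*epsa* sigB*Qa)" "q*B"] assms(1-5)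
    by (simp add: abs_mult)
  moreover have "epsa* sigB*\<bar>Qs\<bar> \<le> (2* sigB) * (4*K^3*\<bar>s1-s2\<bar>)"
    using quart_lip[OF assms(9,10)] assms(2-4) K3 unfolding Qs_def
    by (intro mult_mono) auto
  moreover have "2*epsa* sigB*\<bar>Qa\<bar> \<le> (4* sigB) * (4*K^3*\<bar>a1-a2\<bar>)"
    using quart_lip[OF assms(7,8)] assms(2-4) K3 unfolding Qa_def
    by (intro mult_mono) auto
  moreover have "q*\<bar>B\<bar> \<le> q*(La*\<bar>a1-a2\<bar>)"
    using assms(5,6) unfolding B_def lipschitz_on_def dist_real_def
    by (intro mult_left_mono) auto
  ultimately have "\<bar>rhs_a lam epsa sigB q beta_a a1 s1 - rhs_a lam epsa sigB q beta_a a2 s2\<bar>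
      \<le> lam*\<bar>a1-a2\<bar> + lam*\<bar>s1-s2\<bar> + (2* sigB) * (4*K^3*\<bar>s1-s2\<bar>) + (4* sigB) * (4*K^3*\<bar>a1-a2\<bar>) + q*(La*\<bar>a1-a2\<bar>)"
    by linarith
  also have "\<dots> \<le> (lam + 16* sigB*K^3 + q*La) * (\<bar>a1-a2\<bar> + \<bar>s1-s2\<bar>)"
  proof -
    have "0 \<le> q*La*\<bar>s1-s2\<bar>" "0 \<le> 8* sigB*K^3*\<bar>s1-s2\<bar>"
      using assms(4,5,6) K3 by (auto simp: lipschitz_on_def)
    then show ?thesis by (simp add: algebra_simps)
  qed
  finally show ?thesis .
qed

lemma rhs_s_lip:
  fixes a1 a2 s1 s2 K Ls :: real
  assumes "lam \<ge> 0" "0 < epsa" "epsa < 2" "sigB > 0" "q > 0" "Ls-lipschitz_on UNIV beta_s"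
    "\<bar>a1\<bar> \<le> K" "\<bar>a2\<bar> \<le> K" "\<bar>s1\<bar> \<le> K" "\<bar>s2\<bar> \<le> K"
  shows "\<bar>rhs_s lam epsa sigB q beta_s a1 s1 - rhs_s lam epsa sigB q beta_s a2 s2\<bar>
         \<le> (lam + 16* sigB*K^3 + q*Ls) * (\<bar>a1-a2\<bar> + \<bar>s1-s2\<bar>)"
proof -
  define Qa where "Qa = \<bar>a1\<bar>^3*a1 - \<bar>a2\<bar>^3*a2"
  define Qs where "Qs = \<bar>s1\<bar>^3* s1 - \<bar>s2\<bar>^3* s2"
  define B where "B = beta_s s1 - beta_s s2"
  have K3: "0 \<le> K^3" using assms(7) by simp
  have "rhs_s lam epsa sigB q beta_s a1 s1 - rhs_s lam epsa sigB q beta_s a2 s2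
      = -lam*((s1-s2) - (a1-a2)) - sigB*Qs + epsa* sigB*Qa + q*B"
    by (simp add: rhs_s_def Qa_def Qs_def B_def algebra_simps)
  then have "\<bar>rhs_s lam epsa sigB q beta_s a1 s1 - rhs_s lam epsa sigB q beta_s a2 s2\<bar>
      \<le> lam*\<bar>a1-a2\<bar> + lam*\<bar>s1-s2\<bar> + sigB*\<bar>Qs\<bar> + epsa* sigB*\<bar>Qa\<bar> + q*\<bar>B\<bar>"
    using tri5[OF assms(1), of "s1-s2" "a1-a2" "-(sigB*Qs)" "epsa* sigB*Qa" "q*B"] assms(1-5)
    by (simp add: abs_mult)
  moreover have "sigB*\<bar>Qs\<bar> \<le> sigB * (4*K^3*\<bar>s1-s2\<bar>)"
    using quart_lip[OF assms(9,10)] assms(2-4) K3 unfolding Qs_def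
    by (intro mult_mono) auto
  moreover have "epsa* sigB*\<bar>Qa\<bar> \<le> (2* sigB) * (4*K^3*\<bar>a1-a2\<bar>)"
    using quart_lip[OF assms(7,8)] assms(2-4) K3 unfolding Qa_def
    by (intro mult_mono) auto
  moreover have "q*\<bar>B\<bar> \<le> q*(Ls*\<bar>s1-s2\<bar>)"
    using assms(5,6) unfolding B_def lipschitz_on_def dist_real_def
    by (intro mult_left_mono) auto
  ultimately have "\<bar>rhs_s lam epsa sigB q beta_s a1 s1 - rhs_s lam epsa sigB q beta_s a2 s2\<bar>
      \<le> lam*\<bar>a1-a2\<bar> + lam*\<bar>s1-s2\<bar> + sigB * (4*K^3*\<bar>s1-s2\<bar>) + (2* sigB) * (4*K^3*\<bar>a1-a2\<bar>) + q*(Ls*\<bar>s1-s2\<bar>)"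
    by linarith
  also have "\<dots> \<le> (lam + 16* sigB*K^3 + q*Ls) * (\<bar>a1-a2\<bar> + \<bar>s1-s2\<bar>)"
  proof -
    have "0 \<le> q*Ls*\<bar>a1-a2\<bar>" "0 \<le> 12* sigB*K^3*\<bar>s1-s2\<bar>" "0 \<le> 8* sigB*K^3*\<bar>a1-a2\<bar>"
      using assms(4,5,6) K3 by (auto simp: lipschitz_on_def)
    then show ?thesis by (simp add: algebra_simps)
  qed
  finally show ?thesis .
qed

lemma cont_from_deriv:
  fixes f f' :: "real \<Rightarrow> real"
  assumes "\<And>t. t \<in> S \<Longrightarrow> (f has_real_derivative f' t) (at t within S)"
  shows "continuous_on S f"
  using assms DERIV_continuous continuous_on_eq_continuous_within by blast

lemma barrier_lower:
  fixes f f' :: "real \<Rightarrow> real"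
  assumes d: "\<And>t. 0 \<le> t \<Longrightarrow> (f has_real_derivative f' t) (at t within {0..})"
    and init: "c \<le> f 0" and push: "\<And>t. 0 \<le> t \<Longrightarrow> f t < c \<Longrightarrow> 0 \<le> f' t"
    and t: "0 \<le> t"
  shows "c \<le> f t"
proof (rule ccontr)
  assume "\<not> c \<le> f t"
  then have ft: "f t < c" by simp
  have cont: "continuous_on {0..} f" by (rule cont_from_deriv[of _ _ f']) (use d in auto)
  define S where "S = {s \<in> {0..t}. c \<le> f s}"
  have "closed S" unfolding S_def
    by (rule continuous_on_closed_Collect_le) (auto intro: continuous_on_subset[OF cont])
  moreover have "0 \<in> S" using init t by (simp add: S_def)
  moreover have bdd: "bdd_above S" unfolding S_def by (rule bdd_aboveI[of _ t]) auto
  ultimately have t0S: "Sup S \<in> S" using closed_contains_Sup by blast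
  define t0 where "t0 = Sup S"
  have t0: "0 \<le> t0" "t0 \<le> t" "c \<le> f t0" using t0S by (auto simp: S_def t0_def)
  have "t0 \<noteq> t" using t0 ft by auto
  with t0 have lt: "t0 < t" by simp
  have below: "f s < c" if "t0 < s" "s \<le> t" for s
  proof (rule ccontr)
    assume "\<not> f s < c"
    then have "s \<in> S" using that t0 by (auto simp: S_def)
    then have "s \<le> t0" unfolding t0_def using bdd by (rule cSup_upper)
    with that show False by simp
  qed
  have "f t0 \<le> f t"
  proof (rule DERIV_nonneg_imp_increasing_open[OF less_imp_le[OF lt]])
    fix x assume x: "t0 < x" "x < t"
    have "x \<in> interior {0..}" using x t0 by simp
    then have "at x within {0..} = at x" by (rule at_within_interior)
    then have "DERIV f x :> f' x" using d[of x] x t0 by simp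
    moreover have "0 \<le> f' x" using push[of x] below[of x] x t0 by simp
    ultimately show "\<exists>y. DERIV f x :> y \<and> 0 \<le> y" by blast
  next
    show "continuous_on {t0..t} f" by (rule continuous_on_subset[OF cont]) (use t0 in auto)
  qed
  with t0 ft show False by simp
qed

lemma interior_min_deriv:
  fixes f :: "real \<Rightarrow> real"
  assumes "(f has_real_derivative D) (at t within {0..})" "0 < t" "\<And>s. 0 \<le> s \<Longrightarrow> f t \<le> f s"
  shows "D = 0"
proof -
  have "t \<in> interior {0..}" using assms(2) by simp
  then have "DERIV f t :> D" using assms(1) at_within_interior by metis
  moreover have "\<forall>y. \<bar>t - y\<bar> < t \<longrightarrow> f t \<le> f y" using assms(3) by auto
  ultimately show ?thesis using DERIV_local_min assms(2) by blast
qed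

lemma gronwall0:
  fixes w w' :: "real \<Rightarrow> real"
  assumes d: "\<And>t. t \<in> {0..T} \<Longrightarrow> (w has_real_derivative w' t) (at t within {0..T})"
    and le: "\<And>t. t \<in> {0..T} \<Longrightarrow> w' t \<le> C * w t"
    and w0: "w 0 = 0" and nn: "\<And>t. t \<in> {0..T} \<Longrightarrow> 0 \<le> w t"
    and t: "t \<in> {0..T}"
  shows "w t = 0"
proof (cases "t = 0")
  case True then show ?thesis using w0 by simp
next
  case False
  then have t0: "0 < t" using t by simp
  define v where "v s = exp (- C * s) * w s" for s
  have contw: "continuous_on {0..T} w" by (rule cont_from_deriv[OF d])
  have "v t \<le> v 0"
  proof (rule DERIV_nonpos_imp_decreasing_open[of 0 t v])
    show "0 \<le> t" using t0 by simp
    fix x assume x: "0 < x" "x < t"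
    have "x \<in> interior {0..T}" using x t by auto
    then have "DERIV w x :> w' x" using d[of x] x t at_within_interior by fastforce
    then have "DERIV v x :> (- C * exp (- C * x)) * w x + exp (- C * x) * w' x"
      unfolding v_def by (auto intro!: derivative_eq_intros)
    moreover have "(- C * exp (- C * x)) * w x + exp (- C * x) * w' x = exp (- C * x) * (w' x - C * w x)"
      by (simp add: algebra_simps)
    moreover have "exp (- C * x) * (w' x - C * w x) \<le> 0"
      using le[of x] x t by (intro mult_nonneg_nonpos) auto
    ultimately show "\<exists>y. DERIV v x :> y \<and> y \<le> 0" by metis
  next
    show "continuous_on {0..t} v" unfolding v_def
      by (intro continuous_intros continuous_on_subset[OF contw]) (use t in auto)
  qed
  then have "exp (- C * t) * w t \<le> 0" by (simp add: v_def w0)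
  then have "w t \<le> 0" by (simp add: mult_le_0_iff)
  with nn[OF t] show ?thesis by simp
qed

lemma vd_fst:
  fixes x :: "real \<Rightarrow> real \<times> real"
  assumes "(x has_vector_derivative v) F"
  shows "((\<lambda>t. fst (x t)) has_real_derivative fst v) F"
  using has_derivative_fst[OF assms[unfolded has_vector_derivative_def]]
  by (simp add: has_real_derivative_iff_has_vector_derivative has_vector_derivative_def)

lemma vd_snd:
  fixes x :: "real \<Rightarrow> real \<times> real"
  assumes "(x has_vector_derivative v) F"
  shows "((\<lambda>t. snd (x t)) has_real_derivative snd v) F"
  using has_derivative_snd[OF assms[unfolded has_vector_derivative_def]]
  by (simp add: has_real_derivative_iff_has_vector_derivative has_vector_derivative_def)

lemma quad_bound:
  fixes e1 e2 d1 d2 c :: real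
  assumes "0 \<le> c" "\<bar>d1\<bar> \<le> c*(\<bar>e1\<bar>+\<bar>e2\<bar>)" "\<bar>d2\<bar> \<le> c*(\<bar>e1\<bar>+\<bar>e2\<bar>)"
  shows "2*e1*d1 + 2*e2*d2 \<le> 4*c*(e1^2+e2^2)"
proof -
  have "e1*d1 \<le> \<bar>e1\<bar>*\<bar>d1\<bar>" by (metis abs_ge_self abs_mult)
  also have "\<dots> \<le> \<bar>e1\<bar>*(c*(\<bar>e1\<bar>+\<bar>e2\<bar>))" using assms(2) by (intro mult_left_mono) auto
  finally have 1: "e1*d1 \<le> \<bar>e1\<bar>*(c*(\<bar>e1\<bar>+\<bar>e2\<bar>))" .
  have "e2*d2 \<le> \<bar>e2\<bar>*\<bar>d2\<bar>" by (metis abs_ge_self abs_mult)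
  also have "\<dots> \<le> \<bar>e2\<bar>*(c*(\<bar>e1\<bar>+\<bar>e2\<bar>))" using assms(3) by (intro mult_left_mono) auto
  finally have 2: "e2*d2 \<le> \<bar>e2\<bar>*(c*(\<bar>e1\<bar>+\<bar>e2\<bar>))" .
  have "(\<bar>e1\<bar>+\<bar>e2\<bar>)^2 \<le> 2*(e1^2+e2^2)"
    using sum_squares_bound[of "\<bar>e1\<bar>" "\<bar>e2\<bar>"] by (simp add: power2_eq_square algebra_simps)
  then have 3: "c*(\<bar>e1\<bar>+\<bar>e2\<bar>)^2 \<le> c*(2*(e1^2+e2^2))" using assms(1) by (rule mult_left_mono)
  have "2*e1*d1 + 2*e2*d2 \<le> 2*(c*(\<bar>e1\<bar>+\<bar>e2\<bar>)^2)"
    using 1 2 by (simp add: power2_eq_square algebra_simps)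
  also have "\<dots> \<le> 4*c*(e1^2+e2^2)" using 3 by (simp add: algebra_simps)
  finally show ?thesis .
qed

lemma big_M:
  fixes M C k :: real
  assumes "1 \<le> M" "C / k \<le> M" "0 < k"
  shows "C * M \<le> k * M^4"
proof -
  have "C \<le> k * M" using assms by (simp add: divide_le_eq mult.commute)
  then have "C * M \<le> k * M * M" using assms(1) by (intro mult_right_mono) auto
  also have "\<dots> \<le> k * M^4"
  proof -
    have "1 * 1 \<le> M * M" using assms(1) by (intro mult_mono) auto
    then have "M * M * 1 \<le> M * M * (M * M)" using assms(1) by (intro mult_left_mono) auto
    then have "M * M \<le> M^4" by (simp add: power4_eq_xxxx mult.assoc)
    then show ?thesis using assms(3) by (simp add: mult.assoc)
  qed
  finally show ?thesis .
qed

definition clip :: "real \<Rightarrow> real \<Rightarrow> real" where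
  "clip hi x = max 0 (min hi x)"

lemma clip_lip: "0 \<le> hi \<Longrightarrow> \<bar>clip hi x - clip hi y\<bar> \<le> \<bar>x - y\<bar>"
  unfolding clip_def by (simp add: max_def min_def abs_if)

lemma clip_range: "0 \<le> hi \<Longrightarrow> 0 \<le> clip hi x \<and> clip hi x \<le> hi"
  by (auto simp: clip_def)

lemma clip_id: "0 \<le> x \<Longrightarrow> x \<le> hi \<Longrightarrow> clip hi x = x"
  by (auto simp: clip_def)


theorem proposition2p1:
  fixes gam_a gam_s lam q sigB epsa Ta0 Ts0 :: real
    and beta_a beta_s :: "real \<Rightarrow> real"
  assumes "gam_a > 0" and "gam_s > 0" and "lam \<ge> 0" and "q > 0" and "sigB > 0"
    and "0 < epsa" and "epsa < 2"
    and "\<exists>L. L-lipschitz_on UNIV beta_a" and "\<exists>L. L-lipschitz_on UNIV beta_s"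
    and "\<forall>x. beta_a x \<ge> 0" and "\<forall>x. beta_s x > 0"
    and "Ta0 \<ge> 0" and "Ts0 \<ge> 0"
  shows "\<exists>Ta Ts.
           is_solution gam_a gam_s lam q sigB epsa beta_a beta_s Ta0 Ts0 {0..} Ta Ts
         \<and> bounded (Ta ` {0..}) \<and> bounded (Ts ` {0..})
         \<and> (\<forall>t>0. Ta t > 0 \<and> Ts t > 0)
         \<and> (\<forall>T>0. \<forall>Ua Us.
               is_solution gam_a gam_s lam q sigB epsa beta_a beta_s Ta0 Ts0 {0..T} Ua Us
               \<longrightarrow> (\<forall>t\<in>{0..T}. Ua t = Ta t \<and> Us t = Ts t))"
proof -
  note ga = assms(1) and gs = assms(2) and lam0 = assms(3) and q0 = assms(4) and sig0 = assms(5)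
    and eps0 = assms(6) and eps2 = assms(7) and bapos = assms(10) and bspos = assms(11)
    and a00 = assms(12) and s00 = assms(13)
  obtain Lba where Lba: "Lba-lipschitz_on UNIV beta_a" using assms(8) by blast
  obtain Lbs where Lbs: "Lbs-lipschitz_on UNIV beta_s" using assms(9) by blast
  have Lba0: "0 \<le> Lba" and Lbs0: "0 \<le> Lbs" using Lba Lbs by (auto simp: lipschitz_on_def)
  define Bc where "Bc = \<bar>beta_a 0\<bar> + \<bar>beta_s 0\<bar> + Lba + Lbs"
  have Bc0: "0 \<le> Bc" using Lba0 Lbs0 by (simp add: Bc_def)
  have ba_bound: "beta_a x \<le> Bc * (1 + \<bar>x\<bar>)" for x
  proof -
    have "\<bar>beta_a x - beta_a 0\<bar> \<le> Lba * \<bar>x\<bar>"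
      using Lba unfolding lipschitz_on_def dist_real_def by (metis UNIV_I diff_zero)
    moreover have "Lba * \<bar>x\<bar> \<le> Bc * \<bar>x\<bar>" by (intro mult_right_mono) (auto simp: Bc_def Lbs0)
    moreover have "\<bar>beta_a 0\<bar> \<le> Bc" using Lba0 Lbs0 by (simp add: Bc_def)
    moreover have "Bc * (1 + \<bar>x\<bar>) = Bc + Bc * \<bar>x\<bar>" by (simp add: algebra_simps)
    ultimately show ?thesis by linarith
  qed
  have bs_bound: "beta_s x \<le> Bc * (1 + \<bar>x\<bar>)" for x
  proof -
    have "\<bar>beta_s x - beta_s 0\<bar> \<le> Lbs * \<bar>x\<bar>"
      using Lbs unfolding lipschitz_on_def dist_real_def by (metis UNIV_I diff_zero)
    moreover have "Lbs * \<bar>x\<bar> \<le> Bc * \<bar>x\<bar>" by (intro mult_right_mono) (auto simp: Bc_def Lba0)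
    moreover have "\<bar>beta_s 0\<bar> \<le> Bc" using Lba0 Lbs0 by (simp add: Bc_def)
    moreover have "Bc * (1 + \<bar>x\<bar>) = Bc + Bc * \<bar>x\<bar>" by (simp add: algebra_simps)
    ultimately show ?thesis by linarith
  qed
  define r where "r = root 4 ((epsa + 2) / 2)"
  have r4: "r^4 = (epsa + 2) / 2" using eps0 by (simp add: r_def)
  have r0: "0 < r" using eps0 by (simp add: r_def real_root_gt_zero)
  define k1 where "k1 = epsa * sigB * (2 - r^4)"
  define k2 where "k2 = sigB * (r^4 - epsa)"
  have k1: "0 < k1" using eps0 eps2 sig0 by (simp add: k1_def r4)
  have k2: "0 < k2" using eps0 eps2 sig0 by (simp add: k2_def r4)
  define C1 where "C1 = lam * r + 2 * q * Bc"
  define C2 where "C2 = lam + q * Bc * r + q * Bc"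
  define M where "M = max 1 (max Ta0 (max (Ts0 / r) (max (C1 / k1) (C2 / k2))))"
  define Mp where "Mp = r * M"
  have M1: "1 \<le> M" and MTa: "Ta0 \<le> M" and MC1: "C1 / k1 \<le> M" and MC2: "C2 / k2 \<le> M"
    by (auto simp: M_def)
  have MpTs: "Ts0 \<le> Mp"
  proof -
    have "Ts0 / r \<le> M" by (simp add: M_def)
    then show ?thesis using r0 unfolding Mp_def by (simp add: divide_le_eq mult.commute)
  qed
  have M0: "0 \<le> M" and Mp0: "0 \<le> Mp" using M1 r0 by (auto simp: Mp_def)
  have C1M: "C1 * M \<le> k1 * M^4" by (rule big_M[OF M1 MC1 k1])
  have C2M: "C2 * M \<le> k2 * M^4" by (rule big_M[OF M1 MC2 k2])
  have Mp4: "Mp^4 = r^4 * M^4" by (simp add: Mp_def power_mult_distrib)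
  have condA: "rhs_a lam epsa sigB q beta_a M s \<le> 0" if s0: "0 \<le> s" and sM: "s \<le> Mp" for s
  proof -
    have f1: "- lam * (M - s) \<le> lam * Mp"
    proof -
      have "lam * s \<le> lam * Mp" using sM lam0 by (rule mult_left_mono)
      moreover have "0 \<le> lam * M" using lam0 M0 by simp
      ultimately show ?thesis by (simp add: algebra_simps)
    qed
    have "\<bar>s\<bar>^3 * s = s^4" using s0 by (simp add: power4_eq_xxxx power3_eq_cube)
    also have "\<dots> \<le> Mp^4" using s0 sM by (intro power_mono) auto
    finally have "\<bar>s\<bar>^3 * s \<le> Mp^4" .
    then have f2: "epsa * sigB * (\<bar>s\<bar>^3 * s) \<le> epsa * sigB * Mp^4"
      using eps0 sig0 by (intro mult_left_mono) auto
    have f3: "\<bar>M\<bar>^3 * M = M^4" using M0 by (simp add: power4_eq_xxxx power3_eq_cube)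
    have f4: "q * beta_a M \<le> q * (Bc * (1 + M))"
      using ba_bound[of M] M0 q0 by (intro mult_left_mono) auto
    have e1: "epsa * sigB * Mp^4 = 2 * epsa * sigB * M^4 - k1 * M^4"
      by (simp add: Mp4 k1_def algebra_simps)
    have e2: "lam * Mp + q * Bc * M + q * Bc * M = C1 * M"
      by (simp add: Mp_def C1_def algebra_simps)
    have e3: "q * Bc \<le> q * Bc * M" using M1 q0 Bc0
      by (metis mult.right_neutral mult_left_mono mult_nonneg_nonneg less_imp_le)
    have e4: "q * (Bc * (1 + M)) = q * Bc + q * Bc * M" by (simp add: algebra_simps)
    have "rhs_a lam epsa sigB q beta_a M s
        = - lam * (M - s) + epsa * sigB * (\<bar>s\<bar>^3 * s) - 2 * epsa * sigB * M^4 + q * beta_a M"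
      by (simp add: rhs_a_def f3)
    also have "\<dots> \<le> C1 * M - k1 * M^4"
      using f1 f2 f4 e1 e2 e3 e4 by linarith
    also have "\<dots> \<le> 0" using C1M by simp
    finally show ?thesis .
  qed
  have condB: "rhs_s lam epsa sigB q beta_s a Mp \<le> 0" if a0: "0 \<le> a" and aM: "a \<le> M" for a
  proof -
    have f1: "- lam * (Mp - a) \<le> lam * M"
    proof -
      have "lam * a \<le> lam * M" using aM lam0 by (rule mult_left_mono)
      moreover have "0 \<le> lam * Mp" using lam0 Mp0 by simp
      ultimately show ?thesis by (simp add: algebra_simps)
    qed
    have "\<bar>a\<bar>^3 * a = a^4" using a0 by (simp add: power4_eq_xxxx power3_eq_cube)
    also have "\<dots> \<le> M^4" using a0 aM by (intro power_mono) auto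
    finally have "\<bar>a\<bar>^3 * a \<le> M^4" .
    then have f2: "epsa * sigB * (\<bar>a\<bar>^3 * a) \<le> epsa * sigB * M^4"
      using eps0 sig0 by (intro mult_left_mono) auto
    have f3: "\<bar>Mp\<bar>^3 * Mp = Mp^4" using Mp0 by (simp add: power4_eq_xxxx power3_eq_cube)
    have f4: "q * beta_s Mp \<le> q * (Bc * (1 + Mp))"
      using bs_bound[of Mp] Mp0 q0 by (intro mult_left_mono) auto
    have e1: "sigB * Mp^4 = k2 * M^4 + epsa * sigB * M^4"
      by (simp add: Mp4 k2_def algebra_simps)
    have e2: "lam * M + q * Bc * Mp + q * Bc * M = C2 * M"
      by (simp add: Mp_def C2_def algebra_simps)
    have e3: "q * Bc \<le> q * Bc * M" using M1 q0 Bc0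
      by (metis mult.right_neutral mult_left_mono mult_nonneg_nonneg less_imp_le)
    have e4: "q * (Bc * (1 + Mp)) = q * Bc + q * Bc * Mp" by (simp add: algebra_simps)
    have "rhs_s lam epsa sigB q beta_s a Mp
        = - lam * (Mp - a) - sigB * Mp^4 + epsa * sigB * (\<bar>a\<bar>^3 * a) + q * beta_s Mp"
      by (simp add: rhs_s_def f3)
    also have "\<dots> \<le> C2 * M - k2 * M^4"
      using f1 f2 f4 e1 e2 e3 e4 by linarith
    also have "\<dots> \<le> 0" using C2M by simp
    finally show ?thesis .
  qed
  have condA0: "0 \<le> rhs_a lam epsa sigB q beta_a 0 s" if "0 \<le> s" for s
    using that lam0 eps0 sig0 q0 bapos by (simp add: rhs_a_def)
  have condA0': "0 < rhs_a lam epsa sigB q beta_a 0 s" if "0 < s" for s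
  proof -
    have "0 \<le> q * beta_a 0" using q0 bapos by simp
    moreover have "0 < epsa * sigB * (\<bar>s\<bar> ^ 3 * s)" using that eps0 sig0 by simp
    moreover have "0 \<le> lam * s" using that lam0 by simp
    moreover have "rhs_a lam epsa sigB q beta_a 0 s = lam * s + epsa * sigB * (\<bar>s\<bar> ^ 3 * s) + q * beta_a 0"
      by (simp add: rhs_a_def)
    ultimately show ?thesis by linarith
  qed
  have condB0: "0 < rhs_s lam epsa sigB q beta_s a 0" if "0 \<le> a" for a
  proof -
    have "0 < q * beta_s 0" using q0 bspos by simp
    moreover have "0 \<le> epsa * sigB * (\<bar>a\<bar> ^ 3 * a)" using that eps0 sig0 by simp
    moreover have "0 \<le> lam * a" using that lam0 by simp
    moreover have "rhs_s lam epsa sigB q beta_s a 0 = lam * a + epsa * sigB * (\<bar>a\<bar> ^ 3 * a) + q * beta_s 0"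
      by (simp add: rhs_s_def)
    ultimately show ?thesis by linarith
  qed
  define K where "K = max M Mp"
  have K0: "0 \<le> K" using M0 by (simp add: K_def)
  define Aa where "Aa = lam + 16 * sigB * K^3 + q * Lba"
  define As where "As = lam + 16 * sigB * K^3 + q * Lbs"
  have Aa0: "0 \<le> Aa" using lam0 sig0 K0 q0 Lba0 by (simp add: Aa_def)
  have As0: "0 \<le> As" using lam0 sig0 K0 q0 Lbs0 by (simp add: As_def)
  define G :: "real \<times> real \<Rightarrow> real \<times> real" where
    "G p = (rhs_a lam epsa sigB q beta_a (clip M (fst p)) (clip Mp (snd p)) / gam_a,
            rhs_s lam epsa sigB q beta_s (clip M (fst p)) (clip Mp (snd p)) / gam_s)" for p
  define LG where "LG = 2 * (Aa / gam_a + As / gam_s)"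
  have LG0: "0 \<le> LG" using Aa0 As0 ga gs by (simp add: LG_def)
  have lipG: "LG-lipschitz_on UNIV G"
  proof (unfold lipschitz_on_def, intro conjI ballI LG0)
    fix p p' :: "real \<times> real"
    define a1 where "a1 = clip M (fst p)"
    define a2 where "a2 = clip M (fst p')"
    define s1 where "s1 = clip Mp (snd p)"
    define s2 where "s2 = clip Mp (snd p')"
    have ka: "\<bar>a1\<bar> \<le> K" "\<bar>a2\<bar> \<le> K" using clip_range[OF M0, of "fst p"] clip_range[OF M0, of "fst p'"]
      by (auto simp: a1_def a2_def K_def le_max_iff_disj)
    have ks: "\<bar>s1\<bar> \<le> K" "\<bar>s2\<bar> \<le> K" using clip_range[OF Mp0, of "snd p"] clip_range[OF Mp0, of "snd p'"]
      by (auto simp: s1_def s2_def K_def le_max_iff_disj)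
    have da: "\<bar>a1 - a2\<bar> \<le> dist p p'"
      using clip_lip[OF M0, of "fst p" "fst p'"] dist_fst_le[of p p'] by (simp add: a1_def a2_def dist_real_def)
    have ds: "\<bar>s1 - s2\<bar> \<le> dist p p'"
      using clip_lip[OF Mp0, of "snd p" "snd p'"] dist_snd_le[of p p'] by (simp add: s1_def s2_def dist_real_def)
    have sum: "\<bar>a1 - a2\<bar> + \<bar>s1 - s2\<bar> \<le> 2 * dist p p'" using da ds by simp
    have A: "\<bar>rhs_a lam epsa sigB q beta_a a1 s1 - rhs_a lam epsa sigB q beta_a a2 s2\<bar> \<le> Aa * (2 * dist p p')"
      using rhs_a_lip[OF lam0 eps0 eps2 sig0 q0 Lba ka ks] mult_left_mono[OF sum Aa0]
      unfolding Aa_def by linarith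
    have S: "\<bar>rhs_s lam epsa sigB q beta_s a1 s1 - rhs_s lam epsa sigB q beta_s a2 s2\<bar> \<le> As * (2 * dist p p')"
      using rhs_s_lip[OF lam0 eps0 eps2 sig0 q0 Lbs ka ks] mult_left_mono[OF sum As0]
      unfolding As_def by linarith
    have "dist (G p) (G p') = sqrt ((dist (rhs_a lam epsa sigB q beta_a a1 s1 / gam_a) (rhs_a lam epsa sigB q beta_a a2 s2 / gam_a))^2
       + (dist (rhs_s lam epsa sigB q beta_s a1 s1 / gam_s) (rhs_s lam epsa sigB q beta_s a2 s2 / gam_s))^2)"
      by (simp add: G_def a1_def a2_def s1_def s2_def dist_Pair_Pair)
    also have "\<dots> \<le> dist (rhs_a lam epsa sigB q beta_a a1 s1 / gam_a) (rhs_a lam epsa sigB q beta_a a2 s2 / gam_a)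
       + dist (rhs_s lam epsa sigB q beta_s a1 s1 / gam_s) (rhs_s lam epsa sigB q beta_s a2 s2 / gam_s)"
      by (rule sqrt_sum_squares_le_sum) auto
    also have "\<dots> = \<bar>rhs_a lam epsa sigB q beta_a a1 s1 - rhs_a lam epsa sigB q beta_a a2 s2\<bar> / gam_a
       + \<bar>rhs_s lam epsa sigB q beta_s a1 s1 - rhs_s lam epsa sigB q beta_s a2 s2\<bar> / gam_s"
      using ga gs by (simp add: dist_real_def diff_divide_distrib[symmetric])
    also have "\<dots> \<le> Aa * (2 * dist p p') / gam_a + As * (2 * dist p p') / gam_s"
      using A S ga gs by (intro add_mono divide_right_mono) auto
    also have "\<dots> = LG * dist p p'" by (simp add: LG_def algebra_simps)
    finally show "dist (G p) (G p') \<le> LG * dist p p'" .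
  qed
  obtain x where x0: "x 0 = (Ta0, Ts0)"
    and dx: "\<And>t. 0 \<le> t \<Longrightarrow> (x has_vector_derivative G (x t)) (at t within {0..})"
    using picard_global[OF lipG, of "(Ta0, Ts0)"] by blast
  define Ta where "Ta = (\<lambda>t. fst (x t))"
  define Ts where "Ts = (\<lambda>t. snd (x t))"
  define fA where "fA t = rhs_a lam epsa sigB q beta_a (clip M (Ta t)) (clip Mp (Ts t)) / gam_a" for t
  define fS where "fS t = rhs_s lam epsa sigB q beta_s (clip M (Ta t)) (clip Mp (Ts t)) / gam_s" for t
  have dTa: "(Ta has_real_derivative fA t) (at t within {0..})" if "0 \<le> t" for t
    using vd_fst[OF dx[OF that]] by (simp add: Ta_def Ts_def fA_def G_def)
  have dTs: "(Ts has_real_derivative fS t) (at t within {0..})" if "0 \<le> t" for t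
    using vd_snd[OF dx[OF that]] by (simp add: Ta_def Ts_def fS_def G_def)
  have Ta0: "Ta 0 = Ta0" and Ts0: "Ts 0 = Ts0" using x0 by (auto simp: Ta_def Ts_def)
  have lowA: "0 \<le> Ta t" if "0 \<le> t" for t
  proof (rule barrier_lower[OF dTa _ _ that])
    show "0 \<le> Ta 0" using Ta0 a00 by simp
    fix t assume "0 \<le> t" "Ta t < 0"
    then have "clip M (Ta t) = 0" by (simp add: clip_def)
    moreover have "0 \<le> clip Mp (Ts t)" using clip_range[OF Mp0] by blast
    ultimately show "0 \<le> fA t" using condA0 ga by (simp add: fA_def)
  qed
  have lowS: "0 \<le> Ts t" if "0 \<le> t" for t
  proof (rule barrier_lower[OF dTs _ _ that])
    show "0 \<le> Ts 0" using Ts0 s00 by simp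
    fix t assume "0 \<le> t" "Ts t < 0"
    then have "clip Mp (Ts t) = 0" by (simp add: clip_def)
    moreover have "0 \<le> clip M (Ta t)" using clip_range[OF M0] by blast
    ultimately show "0 \<le> fS t" using condB0 gs by (simp add: fS_def less_imp_le)
  qed
  have upA: "Ta t \<le> M" if "0 \<le> t" for t
  proof -
    have "- M \<le> - Ta t"
    proof (rule barrier_lower[of "\<lambda>t. - Ta t" "\<lambda>t. - fA t", OF _ _ _ that])
      show "((\<lambda>t. - Ta t) has_real_derivative - fA t) (at t within {0..})" if "0 \<le> t" for t
        using DERIV_minus[OF dTa[OF that]] .
      show "- M \<le> - Ta 0" using Ta0 MTa by simp
      fix t assume "0 \<le> t" "- Ta t < - M"
      then have "clip M (Ta t) = M" using M0 by (simp add: clip_def)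
      moreover have "0 \<le> clip Mp (Ts t)" "clip Mp (Ts t) \<le> Mp" using clip_range[OF Mp0] by blast+
      ultimately have "rhs_a lam epsa sigB q beta_a (clip M (Ta t)) (clip Mp (Ts t)) \<le> 0"
        using condA by simp
      then show "0 \<le> - fA t" using ga by (simp add: fA_def divide_nonpos_pos)
    qed
    then show ?thesis by simp
  qed
  have upS: "Ts t \<le> Mp" if "0 \<le> t" for t
  proof -
    have "- Mp \<le> - Ts t"
    proof (rule barrier_lower[of "\<lambda>t. - Ts t" "\<lambda>t. - fS t", OF _ _ _ that])
      show "((\<lambda>t. - Ts t) has_real_derivative - fS t) (at t within {0..})" if "0 \<le> t" for t
        using DERIV_minus[OF dTs[OF that]] .
      show "- Mp \<le> - Ts 0" using Ts0 MpTs by simp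
      fix t assume "0 \<le> t" "- Ts t < - Mp"
      then have "clip Mp (Ts t) = Mp" using Mp0 by (simp add: clip_def)
      moreover have "0 \<le> clip M (Ta t)" "clip M (Ta t) \<le> M" using clip_range[OF M0] by blast+
      ultimately have "rhs_s lam epsa sigB q beta_s (clip M (Ta t)) (clip Mp (Ts t)) \<le> 0"
        using condB by simp
      then show "0 \<le> - fS t" using gs by (simp add: fS_def divide_nonpos_pos)
    qed
    then show ?thesis by simp
  qed
  have fA_eq: "fA t = rhs_a lam epsa sigB q beta_a (Ta t) (Ts t) / gam_a" if "0 \<le> t" for t
    using clip_id[OF lowA[OF that] upA[OF that]] clip_id[OF lowS[OF that] upS[OF that]] by (simp add: fA_def)
  have fS_eq: "fS t = rhs_s lam epsa sigB q beta_s (Ta t) (Ts t) / gam_s" if "0 \<le> t" for t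
    using clip_id[OF lowA[OF that] upA[OF that]] clip_id[OF lowS[OF that] upS[OF that]] by (simp add: fS_def)
  have sol: "is_solution gam_a gam_s lam q sigB epsa beta_a beta_s Ta0 Ts0 {0..} Ta Ts"
    unfolding is_solution_def
  proof (intro conjI Ta0 Ts0 ballI exI)
    fix t :: real assume "t \<in> {0..}"
    then have t: "0 \<le> t" by simp
    show "(Ta has_real_derivative fA t) (at t within {0..})" by (rule dTa[OF t])
    show "(Ts has_real_derivative fS t) (at t within {0..})" by (rule dTs[OF t])
    show "gam_a * fA t = rhs_a lam epsa sigB q beta_a (Ta t) (Ts t)" using ga by (simp add: fA_eq[OF t])
    show "gam_s * fS t = rhs_s lam epsa sigB q beta_s (Ta t) (Ts t)" using gs by (simp add: fS_eq[OF t])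
  qed
  have bA: "bounded (Ta ` {0..})"
    unfolding bounded_iff using lowA upA by (intro exI[of _ M]) auto
  have bS: "bounded (Ts ` {0..})"
    unfolding bounded_iff using lowS upS by (intro exI[of _ Mp]) auto
  have posS: "0 < Ts t" if t: "0 < t" for t
  proof (rule ccontr)
    assume "\<not> 0 < Ts t"
    then have z: "Ts t = 0" using lowS[of t] t by simp
    have "fS t = 0"
      by (rule interior_min_deriv[OF dTs t]) (use z lowS t in auto)
    moreover have "0 < fS t" using fS_eq[of t] t z condB0[OF lowA[of t]] gs by simp
    ultimately show False by simp
  qed
  have posA: "0 < Ta t" if t: "0 < t" for t
  proof (rule ccontr)
    assume "\<not> 0 < Ta t"
    then have z: "Ta t = 0" using lowA[of t] t by simp
    have "fA t = 0"
      by (rule interior_min_deriv[OF dTa t]) (use z lowA t in auto)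
    moreover have "0 < fA t" using fA_eq[of t] t z condA0'[OF posS[OF t]] ga by simp
    ultimately show False by simp
  qed
  have uniq: "\<forall>t\<in>{0..T}. Ua t = Ta t \<and> Us t = Ts t"
    if T0: "T > 0" and solU: "is_solution gam_a gam_s lam q sigB epsa beta_a beta_s Ta0 Ts0 {0..T} Ua Us"
    for T Ua Us
  proof -
    have U0: "Ua 0 = Ta0" "Us 0 = Ts0" using solU by (auto simp: is_solution_def)
    have ex1: "\<forall>t\<in>{0..T}. \<exists>Da Ds. (Ua has_real_derivative Da) (at t within {0..T}) \<and>
        (Us has_real_derivative Ds) (at t within {0..T}) \<and>
        gam_a * Da = rhs_a lam epsa sigB q beta_a (Ua t) (Us t) \<and>
        gam_s * Ds = rhs_s lam epsa sigB q beta_s (Ua t) (Us t)"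
      using solU by (simp add: is_solution_def)
    obtain dA where ex2: "\<forall>t\<in>{0..T}. \<exists>Ds. (Ua has_real_derivative dA t) (at t within {0..T}) \<and>
        (Us has_real_derivative Ds) (at t within {0..T}) \<and>
        gam_a * dA t = rhs_a lam epsa sigB q beta_a (Ua t) (Us t) \<and>
        gam_s * Ds = rhs_s lam epsa sigB q beta_s (Ua t) (Us t)"
      using bchoice[OF ex1] by blast
    obtain dS where dU: "\<forall>t\<in>{0..T}. (Ua has_real_derivative dA t) (at t within {0..T}) \<and>
        (Us has_real_derivative dS t) (at t within {0..T}) \<and>
        gam_a * dA t = rhs_a lam epsa sigB q beta_a (Ua t) (Us t) \<and>
        gam_s * dS t = rhs_s lam epsa sigB q beta_s (Ua t) (Us t)"
      using bchoice[OF ex2] by blast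
    have dUa: "(Ua has_real_derivative dA t) (at t within {0..T})" if "t \<in> {0..T}" for t
      using dU that by blast
    have dUs: "(Us has_real_derivative dS t) (at t within {0..T})" if "t \<in> {0..T}" for t
      using dU that by blast
    have dAe: "dA t = rhs_a lam epsa sigB q beta_a (Ua t) (Us t) / gam_a" if "t \<in> {0..T}" for t
      using dU that ga by (simp add: field_simps)
    have dSe: "dS t = rhs_s lam epsa sigB q beta_s (Ua t) (Us t) / gam_s" if "t \<in> {0..T}" for t
      using dU that gs by (simp add: field_simps)
    have sub: "{0..T} \<subseteq> {0..}" by auto
    have dTa': "(Ta has_real_derivative fA t) (at t within {0..T})" if "t \<in> {0..T}" for t
      using has_field_derivative_subset[OF dTa sub] that by auto
    have dTs': "(Ts has_real_derivative fS t) (at t within {0..T})" if "t \<in> {0..T}" for t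
      using has_field_derivative_subset[OF dTs sub] that by auto
    have cUa: "continuous_on {0..T} Ua" by (rule cont_from_deriv[OF dUa])
    have cUs: "continuous_on {0..T} Us" by (rule cont_from_deriv[OF dUs])
    obtain KA where KA: "\<forall>y\<in>Ua ` {0..T}. norm y \<le> KA"
      using compact_imp_bounded[OF compact_continuous_image[OF cUa compact_Icc]]
      unfolding bounded_iff by blast
    obtain KS where KS: "\<forall>y\<in>Us ` {0..T}. norm y \<le> KS"
      using compact_imp_bounded[OF compact_continuous_image[OF cUs compact_Icc]]
      unfolding bounded_iff by blast
    define K2 where "K2 = max K (max KA KS)"
    have K20: "0 \<le> K2" using K0 by (simp add: K2_def)
    have bnd: "\<bar>Ua t\<bar> \<le> K2" "\<bar>Us t\<bar> \<le> K2" "\<bar>Ta t\<bar> \<le> K2" "\<bar>Ts t\<bar> \<le> K2"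
      if "t \<in> {0..T}" for t
    proof -
      show "\<bar>Ua t\<bar> \<le> K2" using KA that by (force simp: K2_def le_max_iff_disj)
      show "\<bar>Us t\<bar> \<le> K2" using KS that by (force simp: K2_def le_max_iff_disj)
      show "\<bar>Ta t\<bar> \<le> K2" using lowA[of t] upA[of t] that by (auto simp: K2_def K_def le_max_iff_disj)
      show "\<bar>Ts t\<bar> \<le> K2" using lowS[of t] upS[of t] that by (auto simp: K2_def K_def le_max_iff_disj)
    qed
    define c where "c = (lam + 16 * sigB * K2^3 + q * Lba) / gam_a + (lam + 16 * sigB * K2^3 + q * Lbs) / gam_s"
    have c0: "0 \<le> c" using lam0 sig0 K20 q0 Lba0 Lbs0 ga gs by (simp add: c_def)
    define w where "w t = (Ua t - Ta t)^2 + (Us t - Ts t)^2" for t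
    define w' where "w' t = 2 * (Ua t - Ta t) * (dA t - fA t) + 2 * (Us t - Ts t) * (dS t - fS t)" for t
    have dw: "(w has_real_derivative w' t) (at t within {0..T})" if t: "t \<in> {0..T}" for t
    proof -
      have "((\<lambda>t. (Ua t - Ta t)^2 + (Us t - Ts t)^2) has_real_derivative w' t) (at t within {0..T})"
        using dUa[OF t] dTa'[OF t] dUs[OF t] dTs'[OF t]
        by (auto intro!: derivative_eq_intros simp: w'_def algebra_simps)
      then show ?thesis by (simp add: w_def[abs_def])
    qed
    have wle: "w' t \<le> (4 * c) * w t" if t: "t \<in> {0..T}" for t
    proof -
      have tt: "0 \<le> t" using t by simp
      have ea: "\<bar>dA t - fA t\<bar> \<le> c * (\<bar>Ua t - Ta t\<bar> + \<bar>Us t - Ts t\<bar>)"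
      proof -
        define S where "S = \<bar>Ua t - Ta t\<bar> + \<bar>Us t - Ts t\<bar>"
        have S0: "0 \<le> S" by (simp add: S_def)
        define A where "A = lam + 16 * sigB * K2^3 + q * Lba"
        have R: "\<bar>rhs_a lam epsa sigB q beta_a (Ua t) (Us t) - rhs_a lam epsa sigB q beta_a (Ta t) (Ts t)\<bar> \<le> A * S"
          unfolding A_def S_def by (rule rhs_a_lip[OF lam0 eps0 eps2 sig0 q0 Lba bnd(1)[OF t] bnd(3)[OF t] bnd(2)[OF t] bnd(4)[OF t]])
        have "\<bar>dA t - fA t\<bar> = \<bar>rhs_a lam epsa sigB q beta_a (Ua t) (Us t) - rhs_a lam epsa sigB q beta_a (Ta t) (Ts t)\<bar> / gam_a"
          using ga by (simp add: dAe[OF t] fA_eq[OF tt] diff_divide_distrib[symmetric])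
        also have "\<dots> \<le> A * S / gam_a" using R ga by (intro divide_right_mono) auto
        also have "\<dots> = (A / gam_a) * S" by simp
        also have "\<dots> \<le> c * S"
        proof (rule mult_right_mono[OF _ S0])
          have "0 \<le> (lam + 16 * sigB * K2^3 + q * Lbs) / gam_s"
            using lam0 sig0 K20 q0 Lba0 Lbs0 ga gs by simp
          then show "A / gam_a \<le> c" by (simp add: c_def A_def)
        qed
        finally show ?thesis by (simp add: S_def)
      qed
      have es: "\<bar>dS t - fS t\<bar> \<le> c * (\<bar>Ua t - Ta t\<bar> + \<bar>Us t - Ts t\<bar>)"
      proof -
        define S where "S = \<bar>Ua t - Ta t\<bar> + \<bar>Us t - Ts t\<bar>"
        have S0: "0 \<le> S" by (simp add: S_def)
        define A where "A = lam + 16 * sigB * K2^3 + q * Lbs"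
        have R: "\<bar>rhs_s lam epsa sigB q beta_s (Ua t) (Us t) - rhs_s lam epsa sigB q beta_s (Ta t) (Ts t)\<bar> \<le> A * S"
          unfolding A_def S_def by (rule rhs_s_lip[OF lam0 eps0 eps2 sig0 q0 Lbs bnd(1)[OF t] bnd(3)[OF t] bnd(2)[OF t] bnd(4)[OF t]])
        have "\<bar>dS t - fS t\<bar> = \<bar>rhs_s lam epsa sigB q beta_s (Ua t) (Us t) - rhs_s lam epsa sigB q beta_s (Ta t) (Ts t)\<bar> / gam_s"
          using gs by (simp add: dSe[OF t] fS_eq[OF tt] diff_divide_distrib[symmetric])
        also have "\<dots> \<le> A * S / gam_s" using R gs by (intro divide_right_mono) auto
        also have "\<dots> = (A / gam_s) * S" by simp
        also have "\<dots> \<le> c * S"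
        proof (rule mult_right_mono[OF _ S0])
          have "0 \<le> (lam + 16 * sigB * K2^3 + q * Lba) / gam_a"
            using lam0 sig0 K20 q0 Lba0 Lbs0 ga gs by simp
          then show "A / gam_s \<le> c" by (simp add: c_def A_def)
        qed
        finally show ?thesis by (simp add: S_def)
      qed
      show ?thesis using quad_bound[OF c0 ea es] by (simp add: w_def w'_def mult.assoc)
    qed
    have w0: "w 0 = 0" using U0 Ta0 Ts0 by (simp add: w_def)
    have wnn: "0 \<le> w t" for t by (simp add: w_def)
    show ?thesis
    proof
      fix t assume t: "t \<in> {0..T}"
      have "w t = 0" by (rule gronwall0[OF dw wle w0 wnn t])
      then show "Ua t = Ta t \<and> Us t = Ts t"
        by (simp add: w_def add_nonneg_eq_0_iff)
    qed
  qed
  show ?thesis using sol bA bS posA posS uniq by blast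
qed

end
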